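(* Let $(X_n)_{n\in\mathbb N}$ be independent, uniformly bounded real random variables with $\mathbb E(X_n)\sim n^{-a}$ for some $a\in(0,1/6)$, and let $b>0$. Then almost surely there is a constant $C_\omega$ such that for all $N\in\mathbb N$, $$\Bigl|\sum_{m=1}^{[N^b]}\sum_{n=1}^N X_{n+m}X_n\Bigr|\le C_\omega N^{b+1-2a}.$$
   Context: $u_n\sim v_n$ means $u_n/v_n$ converges to a nonzero constant; $[t]$ denotes the integer part. *)

theory Defs
  imports "HOL-Probability.Probability"
begin

end

theory Submission imports Defs begin

lemma powr_mvt:
  fixes x y s :: real
  assumes "0 < x" "x < y"
  shows "\<exists>z. x < z \<and> z < y \<and> y powr s - x powr s = (y - x) * (s * z powr (s - 1))"
proof -
  have "\<And>t. x \<le> t \<Longrightarrow> t \<le> y \<Longrightarrow> ((\<lambda>z. z powr s) has_real_derivative s * t powr (s - 1)) (at t)"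
    using assms by (intro has_real_derivative_powr) auto
  from MVT2[OF assms(2), of "\<lambda>z. z powr s" "\<lambda>z. s * z powr (s - 1)", OF this] show ?thesis by auto
qed

lemma powr_diff_le_ge1:
  fixes x y s :: real
  assumes "0 < x" "x \<le> y" "1 \<le> s"
  shows "y powr s - x powr s \<le> s * y powr (s - 1) * (y - x)"
proof (cases "x = y")
  case False
  then have "x < y" using assms by auto
  from powr_mvt[OF assms(1) this, of s] obtain z where z: "x < z" "z < y"
    "y powr s - x powr s = (y - x) * (s * z powr (s - 1))" by auto
  have "z powr (s - 1) \<le> y powr (s - 1)"
    using z assms by (intro powr_mono2) auto
  then have "s * z powr (s - 1) \<le> s * y powr (s - 1)" using assms by auto
  then show ?thesis using z assms by (simp add: mult.commute mult_left_mono)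
qed simp

lemma sum_powr_le:
  fixes s :: real
  assumes "0 < s" "s < 1"
  shows "(\<Sum>n=1..N. real n powr (-s)) \<le> real N powr (1 - s) / (1 - s)"
proof (induction N)
  case 0
  then show ?case by simp
next
  case (Suc N)
  show ?case
  proof (cases "N = 0")
    case True
    then show ?thesis using assms by (simp add: field_simps)
  next
    case False
    then have pos: "0 < real N" by auto
    from powr_mvt[OF pos, of "real N + 1" "1 - s"] obtain z where z: "real N < z" "z < real N + 1"
      "(real N + 1) powr (1 - s) - real N powr (1 - s) = (real N + 1 - real N) * ((1 - s) * z powr (1 - s - 1))"
      by auto
    have "(real N + 1) powr (-s) \<le> z powr (-s)"
      using z pos assms by (intro powr_mono2') auto
    then have "(1 - s) * (real N + 1) powr (-s) \<le> (real N + 1) powr (1 - s) - real N powr (1 - s)"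
      using z assms by simp
    then have "real (Suc N) powr (-s) \<le> ((real N + 1) powr (1 - s) - real N powr (1 - s)) / (1 - s)"
      using assms by (simp add: pos_le_divide_eq mult.commute add.commute)
    then have "real (Suc N) powr (-s) \<le> real (Suc N) powr (1 - s) / (1 - s) - real N powr (1 - s) / (1 - s)"
      by (simp add: diff_divide_distrib add.commute)
    then show ?thesis using Suc.IH by simp
  qed
qed



lemma abs_prod_le: fixes u v W :: real shows "abs u \<le> W \<Longrightarrow> abs v \<le> W \<Longrightarrow> abs (u * v) \<le> W * W"
  by (simp add: abs_mult mult_mono')

context prob_space begin

lemma expectation_prod_indep:
  fixes Y :: "nat \<Rightarrow> 'a \<Rightarrow> real"
  assumes ind: "indep_vars (\<lambda>_. borel) Y UNIV" and fin: "finite J" and int: "\<And>k. integrable M (Y k)"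
  shows "expectation (\<lambda>\<omega>. \<Prod>k\<in>J. Y k \<omega>) = (\<Prod>k\<in>J. expectation (Y k))"
  by (rule indep_vars_lebesgue_integral) (use indep_vars_subset[OF ind] fin int in auto)

lemma var_bound:
  fixes Y :: "nat \<Rightarrow> 'a \<Rightarrow> real" and J :: "'i \<Rightarrow> nat set"
  assumes ind: "indep_vars (\<lambda>_. borel) Y UNIV"
    and bY: "\<And>k \<omega>. \<bar>Y k \<omega>\<bar> \<le> K"
    and finJ: "\<And>p. finite (J p)"
    and bZ: "\<And>p \<omega>. \<bar>\<Prod>k\<in>J p. Y k \<omega>\<bar> \<le> B"
    and finI: "finite I"
  shows "variance (\<lambda>\<omega>. \<Sum>p\<in>I. \<Prod>k\<in>J p. Y k \<omega>) \<le> 4 * B^2 * (\<Sum>p\<in>I. real (card {q\<in>I. J p \<inter> J q \<noteq> {}}))"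
proof -
  have rv[measurable]: "Y k \<in> borel_measurable M" for k
    using ind unfolding indep_vars_def by auto
  have intY: "integrable M (Y k)" for k
    by (rule integrable_const_bound[where B=K]) (use bY in auto)
  define Z where "Z p \<omega> = (\<Prod>k\<in>J p. Y k \<omega>)" for p \<omega>
  have bZ': "\<bar>Z p \<omega>\<bar> \<le> B" for p \<omega> using bZ unfolding Z_def by blast
  have measZ[measurable]: "Z p \<in> borel_measurable M" for p
    unfolding Z_def by measurable
  have intZ: "integrable M (Z p)" for p
    by (rule integrable_const_bound[where B=B]) (use bZ in \<open>auto simp: Z_def\<close>)
  define c where "c p = expectation (Z p)" for p
  have B0: "0 \<le> B" using bZ[of undefined undefined] by linarith
  have cB: "\<bar>c p\<bar> \<le> B" for p
  proof -
    have "\<bar>c p\<bar> \<le> expectation (\<lambda>\<omega>. \<bar>Z p \<omega>\<bar>)" unfolding c_def by (rule integral_abs_bound)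
    also have "\<dots> \<le> B"
      by (rule integral_le_const) (use intZ[of p, unfolded Z_def] bZ in \<open>auto simp: Z_def\<close>)
    finally show ?thesis .
  qed
  define cov where "cov p q = expectation (\<lambda>\<omega>. (Z p \<omega> - c p) * (Z q \<omega> - c q))" for p q
  have intP: "integrable M (\<lambda>\<omega>. (Z p \<omega> - c p) * (Z q \<omega> - c q))" for p q
  proof (rule integrable_const_bound[where B="(2*B)*(2*B)"])
    show "AE x in M. norm ((Z p x - c p) * (Z q x - c q)) \<le> 2 * B * (2 * B)"
    proof (intro AE_I2)
      fix x
      have "\<bar>Z p x - c p\<bar> \<le> 2 * B" "\<bar>Z q x - c q\<bar> \<le> 2 * B"
        using bZ'[of p x] bZ'[of q x] cB[of p] cB[of q] by auto
      then show "norm ((Z p x - c p) * (Z q x - c q)) \<le> 2 * B * (2 * B)"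
        by (metis abs_prod_le real_norm_def)
    qed
  qed measurable
  have covB: "\<bar>cov p q\<bar> \<le> 4 * B^2" for p q
  proof -
    have "\<bar>cov p q\<bar> \<le> expectation (\<lambda>\<omega>. \<bar>(Z p \<omega> - c p) * (Z q \<omega> - c q)\<bar>)" unfolding cov_def by (rule integral_abs_bound)
    also have "\<dots> \<le> 4 * B^2"
    proof (rule integral_le_const)
      show "integrable M (\<lambda>\<omega>. \<bar>(Z p \<omega> - c p) * (Z q \<omega> - c q)\<bar>)" using intP by auto
      show "AE x in M. \<bar>(Z p x - c p) * (Z q x - c q)\<bar> \<le> 4 * B^2"
      proof (intro AE_I2)
        fix x
        have "\<bar>Z p x - c p\<bar> \<le> 2 * B" "\<bar>Z q x - c q\<bar> \<le> 2 * B"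
          using bZ'[of p x] bZ'[of q x] cB[of p] cB[of q] by auto
        then have "\<bar>(Z p x - c p) * (Z q x - c q)\<bar> \<le> 2 * B * (2 * B)"
          by (metis abs_prod_le real_norm_def)
        then show "\<bar>(Z p x - c p) * (Z q x - c q)\<bar> \<le> 4 * B^2" by (simp add: power2_eq_square)
      qed
    qed
    finally show ?thesis .
  qed
  have cov0: "cov p q = 0" if dj: "J p \<inter> J q = {}" for p q
  proof -
    have cpe: "c p = (\<Prod>k\<in>J p. expectation (Y k))" for p
      unfolding c_def Z_def by (rule expectation_prod_indep[OF ind finJ intY])
    have "expectation (\<lambda>\<omega>. Z p \<omega> * Z q \<omega>) = expectation (\<lambda>\<omega>. \<Prod>k\<in>J p \<union> J q. Y k \<omega>)"
      unfolding Z_def by (subst prod.union_disjoint) (use finJ dj in auto)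
    also have "\<dots> = (\<Prod>k\<in>J p \<union> J q. expectation (Y k))"
      by (rule expectation_prod_indep[OF ind _ intY]) (use finJ in auto)
    also have "\<dots> = c p * c q"
      unfolding cpe by (subst prod.union_disjoint) (use finJ dj in auto)
    finally have EE: "expectation (\<lambda>\<omega>. Z p \<omega> * Z q \<omega>) = c p * c q" .
    have intZZ: "integrable M (\<lambda>\<omega>. Z p \<omega> * Z q \<omega>)"
    proof (rule integrable_const_bound[where B="B*B"])
      show "AE x in M. norm (Z p x * Z q x) \<le> B * B"
        using bZ'[of p] bZ'[of q] by (intro AE_I2) (auto simp: abs_mult intro: mult_mono B0)
    qed measurable
    have "cov p q = expectation (\<lambda>\<omega>. Z p \<omega> * Z q \<omega> - c q * Z p \<omega> - c p * Z q \<omega> + c p * c q)"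
      unfolding cov_def by (rule Bochner_Integration.integral_cong) (auto simp: algebra_simps)
    also have "\<dots> = expectation (\<lambda>\<omega>. Z p \<omega> * Z q \<omega>) - c q * expectation (Z p) - c p * expectation (Z q) + c p * c q"
      using intZZ intZ by (simp add: prob_space)
    also have "\<dots> = 0" using EE by (simp add: c_def)
    finally show ?thesis .
  qed
  define f where "f \<omega> = (\<Sum>p\<in>I. Z p \<omega>)" for \<omega>
  have Ef: "expectation f = (\<Sum>p\<in>I. c p)"
    unfolding f_def c_def by (rule Bochner_Integration.integral_sum) (use intZ in auto)
  have "variance (\<lambda>\<omega>. \<Sum>p\<in>I. \<Prod>k\<in>J p. Y k \<omega>) = expectation (\<lambda>\<omega>. (f \<omega> - expectation f)\<^sup>2)"
    unfolding f_def Z_def by simp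
  also have "\<dots> = expectation (\<lambda>\<omega>. \<Sum>p\<in>I. \<Sum>q\<in>I. (Z p \<omega> - c p) * (Z q \<omega> - c q))"
  proof (rule Bochner_Integration.integral_cong[OF refl])
    fix \<omega>
    have "f \<omega> - expectation f = (\<Sum>p\<in>I. Z p \<omega> - c p)"
      unfolding Ef f_def by (simp add: sum_subtractf)
    then show "(f \<omega> - expectation f)\<^sup>2 = (\<Sum>p\<in>I. \<Sum>q\<in>I. (Z p \<omega> - c p) * (Z q \<omega> - c q))"
      by (simp add: power2_eq_square sum_product)
  qed
  also have "\<dots> = (\<Sum>p\<in>I. \<Sum>q\<in>I. cov p q)"
    unfolding cov_def
    by (subst Bochner_Integration.integral_sum, use intP in \<open>auto intro!: Bochner_Integration.integrable_sum\<close>)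
  also have "\<dots> \<le> (\<Sum>p\<in>I. \<Sum>q\<in>I. if J p \<inter> J q \<noteq> {} then 4 * B^2 else 0)"
    using covB cov0 by (intro sum_mono) (auto simp: abs_le_iff)
  also have "\<dots> = (\<Sum>p\<in>I. 4 * B^2 * real (card {q\<in>I. J p \<inter> J q \<noteq> {}}))"
    by (intro sum.cong refl) (simp add: sum.inter_filter[symmetric] finI)
  also have "\<dots> = 4 * B^2 * (\<Sum>p\<in>I. real (card {q\<in>I. J p \<inter> J q \<noteq> {}}))"
    by (simp add: sum_distrib_left)
  finally show ?thesis .
qed

end


definition Mf :: "real \<Rightarrow> nat \<Rightarrow> nat" where "Mf b N = nat \<lfloor>real N powr b\<rfloor>"
definition cf :: "real \<Rightarrow> nat \<Rightarrow> nat" where "cf b j = nat \<lceil>real j powr (1/b)\<rceil>"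
definition Rg :: "real \<Rightarrow> nat \<Rightarrow> (nat \<times> nat) set" where "Rg b N = {1..Mf b N} \<times> {1..N}"
definition Jp :: "nat \<times> nat \<Rightarrow> nat set" where "Jp p = {snd p, snd p + fst p}"

lemma Mf_le: "real (Mf b N) \<le> real N powr b"
  by (auto simp: Mf_def of_nat_nat)

lemma Mf_ge: "real N powr b - 1 \<le> real (Mf b N)"
  unfolding Mf_def by linarith

lemma Mf_mono: "0 < b \<Longrightarrow> p \<le> N \<Longrightarrow> Mf b p \<le> Mf b N"
  unfolding Mf_def by (intro nat_mono floor_mono powr_mono2) auto

lemma Mf_cf: assumes "0 < b" shows "j \<le> Mf b (cf b j)"
proof -
  have "real j powr (1/b) \<le> real (cf b j)" unfolding cf_def by linarith
  then have "(real j powr (1/b)) powr b \<le> real (cf b j) powr b"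
    using assms by (intro powr_mono2) auto
  then have "real j \<le> real (cf b j) powr b" using assms by (simp add: powr_powr)
  then show ?thesis unfolding Mf_def by (simp add: le_nat_floor)
qed

lemma cf_Mf: assumes "0 < b" shows "cf b (Mf b N) \<le> N"
proof -
  have "real (Mf b N) powr (1/b) \<le> (real N powr b) powr (1/b)"
    using assms Mf_le by (intro powr_mono2) auto
  also have "\<dots> = real N" using assms by (simp add: powr_powr)
  finally show ?thesis unfolding cf_def by (simp add: ceiling_le_iff nat_le_iff)
qed

lemma card_Rg: "card (Rg b N) = Mf b N * N"
  unfolding Rg_def by (simp add: card_cartesian_product)

lemma Rg_mono: "0 < b \<Longrightarrow> p \<le> N \<Longrightarrow> Rg b p \<subseteq> Rg b N"
  unfolding Rg_def using Mf_mono[of b p N] by auto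

lemma region_bound:
  fixes F :: "nat \<times> nat \<Rightarrow> real"
  assumes "0 < b" "p \<le> N" "\<And>q. \<bar>F q\<bar> \<le> W"
  shows "\<bar>(\<Sum>q\<in>Rg b N. F q) - (\<Sum>q\<in>Rg b p. F q)\<bar> \<le> W * (real (Mf b N * N) - real (Mf b p * p))"
proof -
  have sub: "Rg b p \<subseteq> Rg b N" using Rg_mono assms by auto
  have fin: "finite (Rg b N)" unfolding Rg_def by auto
  have "(\<Sum>q\<in>Rg b N. F q) - (\<Sum>q\<in>Rg b p. F q) = (\<Sum>q\<in>Rg b N - Rg b p. F q)"
    using sum_diff[OF fin sub, of F] by simp
  also have "\<bar>\<dots>\<bar> \<le> (\<Sum>q\<in>Rg b N - Rg b p. W)"
    by (rule order_trans[OF sum_abs]) (intro sum_mono assms(3))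
  also have "\<dots> = W * real (card (Rg b N - Rg b p))" by simp
  also have "card (Rg b N - Rg b p) = card (Rg b N) - card (Rg b p)"
    using card_Diff_subset[OF finite_subset[OF sub fin] sub] .
  also have "real (card (Rg b N) - card (Rg b p)) = real (Mf b N * N) - real (Mf b p * p)"
    using card_mono[OF fin sub] by (simp add: card_Rg of_nat_diff)
  finally show ?thesis .
qed

lemma Jp_prod: "fst p \<ge> 1 \<Longrightarrow> (\<Prod>k\<in>Jp p. f k) = f (snd p + fst p) * f (snd p)"
  unfolding Jp_def by (auto simp: mult.commute)

lemma count_overlap:
  assumes "p \<in> Rg b N"
  shows "card {q\<in>Rg b N. Jp p \<inter> Jp q \<noteq> {}} \<le> 4 * Mf b N"
proof -
  obtain m n where p: "p = (m, n)" by force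
  let ?M = "Mf b N"
  have "{q\<in>Rg b N. Jp p \<inter> Jp q \<noteq> {}} \<subseteq> (\<Union>k\<in>{1..?M}. (\<lambda>l. (k, l)) ` {n, n+m, n-k, n+m-k})"
  proof
    fix q assume q: "q \<in> {q\<in>Rg b N. Jp p \<inter> Jp q \<noteq> {}}"
    obtain k l where ql: "q = (k, l)" by force
    have "k \<in> {1..?M}" using q ql unfolding Rg_def by auto
    moreover have "{n, n+m} \<inter> {l, l+k} \<noteq> {}" using q ql p by (simp add: Jp_def)
    then have "l \<in> {n, n+m, n-k, n+m-k}" by auto
    ultimately show "q \<in> (\<Union>k\<in>{1..?M}. (\<lambda>l. (k, l)) ` {n, n+m, n-k, n+m-k})" using ql by auto
  qed
  then have "card {q\<in>Rg b N. Jp p \<inter> Jp q \<noteq> {}} \<le> card (\<Union>k\<in>{1..?M}. (\<lambda>l. (k, l)) ` {n, n+m, n-k, n+m-k})"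
    by (intro card_mono) auto
  also have "\<dots> \<le> (\<Sum>k\<in>{1..?M}. card ((\<lambda>l. (k, l)) ` {n, n+m, n-k, n+m-k}))"
    by (rule card_UN_le) auto
  also have "\<dots> \<le> (\<Sum>k\<in>{1..?M}. 4)"
  proof (intro sum_mono)
    fix k
    have "card ((\<lambda>l. (k, l)) ` {n, n+m, n-k, n+m-k}) \<le> card {n, n+m, n-k, n+m-k}" by (rule card_image_le) auto
    also have "\<dots> \<le> 4" using card_length[of "[n, n+m, n-k, n+m-k]"] by simp
    finally show "card ((\<lambda>l. (k, l)) ` {n, n+m, n-k, n+m-k}) \<le> 4" .
  qed
  also have "\<dots> = 4 * ?M" by simp
  finally show ?thesis .
qed

lemma count_overlap_sum:
  "(\<Sum>p\<in>Rg b N. real (card {q\<in>Rg b N. Jp p \<inter> Jp q \<noteq> {}})) \<le> 4 * real (Mf b N)^2 * real N"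
proof -
  have "(\<Sum>p\<in>Rg b N. real (card {q\<in>Rg b N. Jp p \<inter> Jp q \<noteq> {}})) \<le> (\<Sum>p\<in>Rg b N. 4 * real (Mf b N))"
  proof (intro sum_mono)
    fix p assume "p \<in> Rg b N"
    from of_nat_mono[OF count_overlap[OF this], where 'a=real]
    show "real (card {q\<in>Rg b N. Jp p \<inter> Jp q \<noteq> {}}) \<le> 4 * real (Mf b N)" by simp
  qed
  also have "\<dots> = 4 * real (Mf b N)^2 * real N" by (simp add: card_Rg power2_eq_square)
  finally show ?thesis .
qed

lemma cube_exists: fixes N :: nat shows "\<exists>k. k^3 \<le> N \<and> N < (k+1)^3"
proof (induction N)
  case 0 then show ?case by (intro exI[of _ 0]) auto
next
  case (Suc N)
  then obtain k where k: "k^3 \<le> N" "N < (k+1)^3" by auto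
  show ?case
  proof (cases "Suc N < (k+1)^3")
    case True then show ?thesis using k by (intro exI[of _ k]) auto
  next
    case False
    then have "Suc N = (k+1)^3" using k by auto
    moreover have "(k+1)^3 < (k+2)^3" by (intro power_strict_mono) auto
    ultimately show ?thesis by (intro exI[of _ "k+1"]) auto
  qed
qed



lemma gap_lemma:
  fixes N :: nat and a :: real
  assumes N: "1 \<le> N" and a: "0 < a" "a < 1/6"
  shows "\<exists>k. 1 \<le> k \<and> k^3 \<le> N \<and> real N - real (k^3) \<le> 6 * real N powr (1 - 2*a)"
proof -
  obtain k where k: "k^3 \<le> N" "N < (k+1)^3" using cube_exists by blast
  have k1: "1 \<le> k" using k N by (cases k) auto
  have "N + 1 \<le> k^3 + 3*k^2 + 3*k + 1" using k(2) by (simp add: power3_eq_cube power2_eq_square algebra_simps)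
  moreover have "k \<le> k^2" using k1 by (simp add: power2_eq_square)
  ultimately have "N \<le> k^3 + 6 * k^2" by linarith
  then have d: "real N - real (k^3) \<le> 6 * (real k)^2" by (simp flip: of_nat_power)
  have Npos: "0 < real N" using N by auto
  have "real k powr 3 \<le> real N" using k(1) k1 by (simp add: powr_realpow flip: of_nat_power)
  then have "(real k powr 3) powr (1/3) \<le> real N powr (1/3)" by (intro powr_mono2) auto
  moreover have "(real k powr 3) powr (1/3) = real k" by (subst powr_powr) simp
  ultimately have kk: "real k \<le> real N powr (1/3)" by simp
  have "(real k)^2 = real k powr 2" using k1 by (simp add: powr_realpow)
  also have "\<dots> \<le> (real N powr (1/3)) powr 2" using kk by (intro powr_mono2) auto
  also have "\<dots> = real N powr (2/3)" by (simp add: powr_powr)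
  also have "\<dots> \<le> real N powr (1 - 2*a)" using N a by (intro powr_mono) auto
  finally show ?thesis using d k1 k(1) by (intro exI[of _ k]) auto
qed

lemma det_final:
  fixes s :: "nat \<Rightarrow> real" and a b K :: real
  assumes a: "0 < a" "a < 1/6" and b: "0 < b" and K: "0 \<le> K"
    and region: "\<And>N p. p \<le> N \<Longrightarrow> \<bar>s N - s p\<bar> \<le> K * (real (Mf b N * N) - real (Mf b p * p))"
    and H1: "\<exists>C. \<forall>k. \<bar>s (k^3)\<bar> \<le> C * real (k^3) powr (b+1-2*a)"
    and H2: "b < 2*a \<Longrightarrow> \<exists>C. \<forall>j. \<bar>s (cf b j)\<bar> \<le> C * real (cf b j) powr (b+1-2*a)"
    and s0: "s 0 = 0"
  shows "\<exists>C. \<forall>N. \<bar>s N\<bar> \<le> C * real N powr (b+1-2*a)"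
proof -
  define e where "e = b+1-2*a"
  have e0: "0 < e" using a b unfolding e_def by auto
  obtain C1 where C1: "\<And>k. \<bar>s (k^3)\<bar> \<le> C1 * real (k^3) powr e" using H1 unfolding e_def by auto
  have C10: "0 \<le> C1" using C1[of 1] by simp
  show ?thesis
  proof (cases "2*a \<le> b")
    case True
    have e1: "1 \<le> e" using True unfolding e_def by simp
    have "\<bar>s N\<bar> \<le> (C1 + K * (6*(b+1)+1)) * real N powr e" for N
    proof (cases "N = 0")
      case True then show ?thesis using s0 by simp
    next
      case False
      then have N1: "1 \<le> N" by simp
      then have Npos: "0 < real N" by simp
      obtain k where k: "1 \<le> k" "k^3 \<le> N" "real N - real (k^3) \<le> 6 * real N powr (1 - 2*a)"
        using gap_lemma[OF N1 a] by auto
      define p where "p = k^3"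
      have p1: "1 \<le> real p" using k(1) unfolding p_def by simp
      have pN: "real p \<le> real N" using k(2) unfolding p_def by simp
      have "real (Mf b N * N) \<le> real N powr b * real N" using mult_right_mono[OF Mf_le[of b N], of "real N"] by simp
      also have "\<dots> = real N powr (b+1)" using Npos by (simp add: powr_add)
      finally have A: "real (Mf b N * N) \<le> real N powr (b+1)" .
      have "real p powr (b+1) - real p = (real p powr b - 1) * real p" using p1 by (simp add: powr_add algebra_simps)
      also have "\<dots> \<le> real (Mf b p * p)" using Mf_ge[of p b] p1 by (simp add: mult_right_mono)
      finally have B: "real p powr (b+1) - real p \<le> real (Mf b p * p)" .
      have "real N powr (b+1) - real p powr (b+1) \<le> (b+1) * real N powr (b+1-1) * (real N - real p)"
        using p1 pN b by (intro powr_diff_le_ge1) auto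
      also have "\<dots> \<le> (b+1) * real N powr b * (6 * real N powr (1 - 2*a))"
        using k(3) b pN unfolding p_def by (simp add: mult_left_mono)
      also have "\<dots> = 6*(b+1) * real N powr e" unfolding e_def using Npos by (simp add: powr_add[symmetric] algebra_simps)
      finally have D: "real N powr (b+1) - real p powr (b+1) \<le> 6*(b+1) * real N powr e" .
      have pe: "real p \<le> real N powr e"
        using pN N1 e1 by (metis order_trans powr_mono powr_one of_nat_0_le_iff of_nat_1 of_nat_le_iff)
      have reg: "\<bar>s N - s p\<bar> \<le> K * ((6*(b+1)+1) * real N powr e)"
      proof -
        have "\<bar>s N - s p\<bar> \<le> K * (real (Mf b N * N) - real (Mf b p * p))" using region[OF k(2)] unfolding p_def .
        also have "\<dots> \<le> K * ((6*(b+1)+1) * real N powr e)"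
        proof (intro mult_left_mono K)
          have "(6*(b+1)+1) * real N powr e = 6*(b+1)*real N powr e + real N powr e" by (simp add: algebra_simps)
          then show "real (Mf b N * N) - real (Mf b p * p) \<le> (6*(b+1)+1) * real N powr e"
            using A B D pe by linarith
        qed
        finally show ?thesis .
      qed
      have "\<bar>s p\<bar> \<le> C1 * real p powr e" using C1 unfolding p_def by auto
      also have "\<dots> \<le> C1 * real N powr e" using C10 pN p1 e0 by (intro mult_left_mono powr_mono2) auto
      finally show ?thesis using reg by (simp add: algebra_simps)
    qed
    then show ?thesis unfolding e_def by blast
  next
    case False
    then have bsmall: "b < 2*a" by simp
    obtain C2 where C2: "\<And>j. \<bar>s (cf b j)\<bar> \<le> C2 * real (cf b j) powr e" using H2[OF bsmall] unfolding e_def by auto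
    have cf1: "cf b 1 = 1" unfolding cf_def by simp
    have C20: "0 \<le> C2" using C2[of 1] unfolding cf1 by simp
    have "\<bar>s N\<bar> \<le> (C1 + C2 + 6 * K) * real N powr e" for N
    proof (cases "N = 0")
      case True then show ?thesis using s0 by simp
    next
      case False
      then have N1: "1 \<le> N" by simp
      then have Npos: "0 < real N" by simp
      obtain k where k: "1 \<le> k" "k^3 \<le> N" "real N - real (k^3) \<le> 6 * real N powr (1 - 2*a)"
        using gap_lemma[OF N1 a] by auto
      define q where "q = cf b (Mf b N)"
      have qN: "q \<le> N" unfolding q_def using cf_Mf b by auto
      have Mq: "Mf b N \<le> Mf b q" unfolding q_def using Mf_cf b by auto
      define p where "p = max (k^3) q"
      have pN: "p \<le> N" using qN k(2) unfolding p_def by auto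
      have p1: "1 \<le> p" using k(1) unfolding p_def by (simp add: le_max_iff_disj)
      have Mp: "Mf b p = Mf b N" using Mf_mono[OF b pN] Mf_mono[OF b, of q p] Mq unfolding p_def by auto
      have "real (k^3) \<le> real p" unfolding p_def by (simp del: of_nat_power)
      then have gp: "real N - real p \<le> 6 * real N powr (1 - 2*a)" using k(3) by linarith
      have "\<bar>s N - s p\<bar> \<le> K * (real (Mf b N * N) - real (Mf b p * p))" using region pN by auto
      also have "\<dots> = K * (real (Mf b N) * (real N - real p))" unfolding Mp by (simp add: algebra_simps)
      also have "\<dots> \<le> K * (real N powr b * (6 * real N powr (1 - 2*a)))"
        using Mf_le[of b N] gp pN K by (intro mult_left_mono mult_mono) auto
      also have "\<dots> = 6 * K * real N powr e" unfolding e_def using Npos by (simp add: powr_add[symmetric] algebra_simps)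
      finally have reg: "\<bar>s N - s p\<bar> \<le> 6 * K * real N powr e" .
      have sp: "\<bar>s p\<bar> \<le> (C1 + C2) * real p powr e"
      proof (cases "p = q")
        case True
        have "\<bar>s p\<bar> \<le> C2 * real p powr e" using C2 True unfolding q_def by auto
        also have "\<dots> \<le> (C1 + C2) * real p powr e" using C10 by (intro mult_right_mono) auto
        finally show ?thesis .
      next
        case False
        then have "p = k^3" unfolding p_def by auto
        then have "\<bar>s p\<bar> \<le> C1 * real p powr e" using C1 by auto
        also have "\<dots> \<le> (C1 + C2) * real p powr e" using C20 by (intro mult_right_mono) auto
        finally show ?thesis .
      qed
      also have "\<dots> \<le> (C1 + C2) * real N powr e" using C10 C20 pN p1 e0 by (intro mult_left_mono powr_mono2) auto
      finally show ?thesis using reg by (simp add: algebra_simps)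
    qed
    then show ?thesis unfolding e_def by blast
  qed
qed



lemma ev_to_all:
  fixes g :: "nat \<Rightarrow> real" and h :: "nat \<Rightarrow> nat"
  assumes ev: "eventually (\<lambda>k. \<bar>g (h k)\<bar> \<le> D * real (h k) powr e) sequentially"
    and z: "\<And>k. h k = 0 \<Longrightarrow> g (h k) = 0"
  shows "\<exists>C. \<forall>k. \<bar>g (h k)\<bar> \<le> C * real (h k) powr e"
proof -
  obtain k0 where k0: "\<And>k. k \<ge> k0 \<Longrightarrow> \<bar>g (h k)\<bar> \<le> D * real (h k) powr e"
    using ev unfolding eventually_sequentially by auto
  define C where "C = \<bar>D\<bar> + (\<Sum>k<k0. \<bar>g (h k)\<bar> / real (h k) powr e)"
  have S0: "0 \<le> (\<Sum>k<k0. \<bar>g (h k)\<bar> / real (h k) powr e)" by (intro sum_nonneg) auto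
  have "\<bar>g (h k)\<bar> \<le> C * real (h k) powr e" for k
  proof (cases "k \<ge> k0")
    case True
    have "\<bar>g (h k)\<bar> \<le> D * real (h k) powr e" using k0 True by auto
    also have "\<dots> \<le> C * real (h k) powr e" unfolding C_def using S0 by (intro mult_right_mono) auto
    finally show ?thesis .
  next
    case False
    show ?thesis
    proof (cases "h k = 0")
      case True then show ?thesis using z by simp
    next
      case hk: False
      then have xpos: "0 < real (h k) powr e" by simp
      have "\<bar>g (h k)\<bar> / real (h k) powr e \<le> (\<Sum>k<k0. \<bar>g (h k)\<bar> / real (h k) powr e)"
        using False by (intro member_le_sum) auto
      also have "\<dots> \<le> C" unfolding C_def by simp
      finally show ?thesis using xpos by (simp add: pos_divide_le_eq)
    qed
  qed
  then show ?thesis by blast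
qed

lemma prod_Jp_bound:
  fixes Y :: "nat \<Rightarrow> 'a \<Rightarrow> real"
  assumes "\<And>k \<omega>. \<bar>Y k \<omega>\<bar> \<le> K" "1 \<le> K"
  shows "\<bar>\<Prod>k\<in>Jp p. Y k \<omega>\<bar> \<le> K^2"
proof -
  have "\<bar>\<Prod>k\<in>Jp p. Y k \<omega>\<bar> = (\<Prod>k\<in>Jp p. \<bar>Y k \<omega>\<bar>)" by (rule abs_prod)
  also have "\<dots> \<le> (\<Prod>k\<in>Jp p. K)" by (intro prod_mono) (use assms in auto)
  also have "\<dots> = K ^ card (Jp p)" by simp
  also have "\<dots> \<le> K^2"
  proof (rule power_increasing[OF _ assms(2)])
    show "card (Jp p) \<le> 2" unfolding Jp_def by (simp add: card_insert_le_m1 card_insert_if)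
  qed
  finally show ?thesis .
qed

context prob_space begin

lemma bc_generic:
  assumes A: "\<And>k. A k \<in> events"
    and ev: "eventually (\<lambda>k. prob (A k) \<le> c * real k powr t) sequentially" and t: "t < -1"
  shows "AE \<omega> in M. eventually (\<lambda>k. \<omega> \<notin> A k) sequentially"
proof -
  have "summable (\<lambda>k. c * real k powr t)"
    by (intro summable_mult) (use t summable_real_powr_iff in auto)
  then have sum: "summable (\<lambda>k. measure M (A k))"
    by (rule summable_comparison_test_ev[rotated]) (use ev in \<open>auto elim!: eventually_mono\<close>)
  have "AE x in M. eventually (\<lambda>n. x \<in> space M - A n) sequentially"
    by (rule borel_cantelli_AE1[OF A _ sum]) (simp add: less_top[symmetric])
  then show ?thesis by (auto elim!: eventually_mono)
qed

end


context prob_space begin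

lemma main_bounded:
  fixes Y :: "nat \<Rightarrow> 'a \<Rightarrow> real" and a b K D :: real
  assumes ind: "indep_vars (\<lambda>_. borel) Y UNIV"
    and bY: "\<And>k \<omega>. \<bar>Y k \<omega>\<bar> \<le> K" and K1: "1 \<le> K"
    and muB: "\<And>n. 1 \<le> n \<Longrightarrow> \<bar>expectation (Y n)\<bar> \<le> D * real n powr (-a)"
    and a: "0 < a" "a < 1/6" and b: "0 < b"
  shows "AE \<omega> in M. \<exists>C. \<forall>N. \<bar>\<Sum>p\<in>Rg b N. \<Prod>k\<in>Jp p. Y k \<omega>\<bar> \<le> C * real N powr (b+1-2*a)"
proof -
  define e where "e = b+1-2*a"
  have e0: "0 < e" using a b unfolding e_def by auto
  have rv[measurable]: "Y k \<in> borel_measurable M" for k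
    using ind unfolding indep_vars_def by auto
  have intY: "integrable M (Y k)" for k
    by (rule integrable_const_bound[where B=K]) (use bY in auto)
  define S where "S N \<omega> = (\<Sum>p\<in>Rg b N. \<Prod>k\<in>Jp p. Y k \<omega>)" for N \<omega>
  have measS[measurable]: "S N \<in> borel_measurable M" for N unfolding S_def by measurable
  have finRg: "finite (Rg b N)" for N unfolding Rg_def by auto
  have bP: "\<bar>\<Prod>k\<in>Jp p. Y k \<omega>\<bar> \<le> K^2" for p \<omega> by (rule prod_Jp_bound[OF bY K1])
  have finJ: "finite (Jp p)" for p unfolding Jp_def by auto
  have intP: "integrable M (\<lambda>\<omega>. \<Prod>k\<in>Jp p. Y k \<omega>)" for p
    by (rule integrable_const_bound[where B="K^2"]) (use bP in auto)
  define E where "E N = expectation (S N)" for N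
  have D0: "0 \<le> D" using muB[of 1] by simp
  define C2 where "C2 = D^2 / (1 - 2*a)"
  have Ebound: "\<bar>E N\<bar> \<le> C2 * real N powr e" for N
  proof -
    have "E N = (\<Sum>p\<in>Rg b N. expectation (\<lambda>\<omega>. \<Prod>k\<in>Jp p. Y k \<omega>))"
      unfolding E_def S_def by (rule Bochner_Integration.integral_sum) (use intP in auto)
    also have "\<dots> = (\<Sum>p\<in>Rg b N. \<Prod>k\<in>Jp p. expectation (Y k))"
      by (intro sum.cong refl expectation_prod_indep[OF ind finJ intY])
    finally have EN: "E N = (\<Sum>p\<in>Rg b N. \<Prod>k\<in>Jp p. expectation (Y k))" .
    have tb: "\<bar>\<Prod>k\<in>Jp p. expectation (Y k)\<bar> \<le> D^2 * real (snd p) powr (-2*a)" if p: "p \<in> Rg b N" for p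
    proof -
      obtain m n where mn: "p = (m, n)" by force
      have m1: "1 \<le> m" and n1: "1 \<le> n" using p mn unfolding Rg_def by auto
      have "\<bar>\<Prod>k\<in>Jp p. expectation (Y k)\<bar> = \<bar>expectation (Y (n+m))\<bar> * \<bar>expectation (Y n)\<bar>"
        using Jp_prod[of p "\<lambda>k. expectation (Y k)"] m1 mn by (simp add: abs_mult)
      also have "\<dots> \<le> (D * real (n+m) powr (-a)) * (D * real n powr (-a))"
        using muB[of "n+m"] muB[of n] n1 by (intro mult_mono) auto
      also have "\<dots> \<le> (D * real n powr (-a)) * (D * real n powr (-a))"
        using D0 n1 a by (intro mult_right_mono mult_left_mono powr_mono2') auto
      also have "\<dots> = D^2 * real n powr (-2*a)"
        by (simp add: power2_eq_square powr_add[symmetric] algebra_simps)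
      finally show ?thesis using mn by simp
    qed
    have "\<bar>E N\<bar> \<le> (\<Sum>p\<in>Rg b N. D^2 * real (snd p) powr (-2*a))"
      unfolding EN by (rule order_trans[OF sum_abs]) (intro sum_mono tb)
    also have "\<dots> = (\<Sum>m\<in>{1..Mf b N}. \<Sum>n\<in>{1..N}. D^2 * real n powr (-2*a))"
      unfolding Rg_def sum.cartesian_product by (simp add: case_prod_beta)
    also have "\<dots> = real (Mf b N) * (D^2 * (\<Sum>n=1..N. real n powr (-(2*a))))"
      by (simp add: sum_distrib_left)
    also have "\<dots> \<le> real N powr b * (D^2 * (real N powr (1 - 2*a) / (1 - 2*a)))"
      using a D0 by (intro mult_mono Mf_le mult_left_mono sum_powr_le) (auto intro!: sum_nonneg mult_nonneg_nonneg)
    also have "\<dots> = C2 * real N powr e"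
      unfolding C2_def e_def by (cases "N = 0") (auto simp: powr_add[symmetric] algebra_simps)
    finally show ?thesis .
  qed
  have cheb: "prob {\<omega>\<in>space M. real N powr e \<le> \<bar>S N \<omega> - E N\<bar>} \<le> 16 * K^4 * real N powr (4*a-1)"
    if N1: "1 \<le> N" for N
  proof -
    have Npos: "0 < real N" using N1 by auto
    have int2: "integrable M (\<lambda>x. S N x ^ 2)"
    proof (rule integrable_const_bound[where B="(real (card (Rg b N)) * K^2)^2"])
      show "AE x in M. norm (S N x ^ 2) \<le> (real (card (Rg b N)) * K^2)^2"
      proof (intro AE_I2)
        fix x
        have "\<bar>S N x\<bar> \<le> (\<Sum>p\<in>Rg b N. K^2)" unfolding S_def
          by (rule order_trans[OF sum_abs]) (intro sum_mono bP)
        then have "\<bar>S N x\<bar> \<le> real (card (Rg b N)) * K^2" by simp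
        then have "\<bar>S N x\<bar>^2 \<le> (real (card (Rg b N)) * K^2)^2" by (rule power_mono) simp
        then show "norm (S N x ^ 2) \<le> (real (card (Rg b N)) * K^2)^2" by simp
      qed
    qed measurable
    have "prob {\<omega>\<in>space M. real N powr e \<le> \<bar>S N \<omega> - E N\<bar>} \<le> variance (S N) / (real N powr e)^2"
      unfolding E_def by (rule Chebyshev_inequality) (use int2 Npos in auto)
    also have "variance (S N) \<le> 4 * (K^2)^2 * (4 * real (Mf b N)^2 * real N)"
    proof -
      have "variance (S N) \<le> 4 * (K^2)^2 * (\<Sum>p\<in>Rg b N. real (card {q\<in>Rg b N. Jp p \<inter> Jp q \<noteq> {}}))"
        unfolding S_def by (rule var_bound[OF ind bY finJ bP finRg])
      also have "\<dots> \<le> 4 * (K^2)^2 * (4 * real (Mf b N)^2 * real N)"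
        by (intro mult_left_mono count_overlap_sum) auto
      finally show ?thesis .
    qed
    then have "variance (S N) / (real N powr e)^2 \<le> 4 * (K^2)^2 * (4 * real (Mf b N)^2 * real N) / (real N powr e)^2"
      by (intro divide_right_mono) auto
    also have "\<dots> \<le> 4 * (K^2)^2 * (4 * (real N powr b)^2 * real N) / (real N powr e)^2"
      by (intro divide_right_mono mult_left_mono mult_right_mono power_mono Mf_le) auto
    also have "\<dots> = 16 * K^4 * real N powr (4*a-1)"
    proof -
      have "(real N powr b)^2 * real N = real N powr (2*e) * real N powr (4*a-1)"
      proof -
        have "(real N powr b)^2 * real N = real N powr b * real N powr b * real N powr 1"
          using Npos by (simp add: power2_eq_square)
        also have "\<dots> = real N powr (b + b + 1)" by (simp only: powr_add)
        also have "b + b + 1 = 2*e + (4*a-1)" unfolding e_def by simp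
        also have "real N powr (2*e + (4*a-1)) = real N powr (2*e) * real N powr (4*a-1)" by (rule powr_add)
        finally show ?thesis .
      qed
      moreover have "(real N powr e)^2 = real N powr (2*e)"
        by (simp add: power2_eq_square powr_add[symmetric])
      moreover have "K^4 = K*(K*(K*K))" by (simp add: eval_nat_numeral)
      ultimately show ?thesis using Npos by (simp add: field_simps power2_eq_square)
    qed
    finally show ?thesis by simp
  qed
  define A where "A k = {\<omega>\<in>space M. real (k^3) powr e \<le> \<bar>S (k^3) \<omega> - E (k^3)\<bar>}" for k
  have AE1: "AE \<omega> in M. eventually (\<lambda>k. \<omega> \<notin> A k) sequentially"
  proof (rule bc_generic)
    show "A k \<in> events" for k unfolding A_def by measurable
    show "eventually (\<lambda>k. prob (A k) \<le> 16 * K^4 * real k powr (3*(4*a-1))) sequentially"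
      unfolding eventually_sequentially
    proof (intro exI[of _ 1] allI impI)
      fix k :: nat assume k1: "1 \<le> k"
      have "prob (A k) \<le> 16 * K^4 * real (k^3) powr (4*a-1)"
        unfolding A_def by (rule cheb) (use k1 in auto)
      also have "real (k^3) powr (4*a-1) = real k powr (3*(4*a-1))"
      proof -
        have "real (k^3) powr (4*a-1) = (real k powr (real 3)) powr (4*a-1)" using k1 by (simp add: powr_realpow)
        also have "\<dots> = real k powr (3*(4*a-1))" by (simp only: powr_powr) simp
        finally show ?thesis .
      qed
      finally show "prob (A k) \<le> 16 * K^4 * real k powr (3*(4*a-1))" .
    qed
    show "3*(4*a-1) < -1" using a by simp
  qed
  define B where "B j = {\<omega>\<in>space M. real (cf b j) powr e \<le> \<bar>S (cf b j) \<omega> - E (cf b j)\<bar>}" for j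
  have AE2: "AE \<omega> in M. b < 2*a \<longrightarrow> eventually (\<lambda>j. \<omega> \<notin> B j) sequentially"
  proof (cases "b < 2*a")
    case True
    have "AE \<omega> in M. eventually (\<lambda>j. \<omega> \<notin> B j) sequentially"
    proof (rule bc_generic)
      show "B k \<in> events" for k unfolding B_def by measurable
      show "eventually (\<lambda>j. prob (B j) \<le> 16 * K^4 * real j powr ((4*a-1)/b)) sequentially"
        unfolding eventually_sequentially
      proof (intro exI[of _ 1] allI impI)
        fix j :: nat assume j1: "1 \<le> j"
        have cj: "real j powr (1/b) \<le> real (cf b j)" unfolding cf_def by linarith
        have jpos: "0 < real j powr (1/b)" using j1 by simp
        then have cj1: "1 \<le> cf b j" using cj by (cases "cf b j") auto
        have "prob (B j) \<le> 16 * K^4 * real (cf b j) powr (4*a-1)"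
          unfolding B_def by (rule cheb) (use cj1 in auto)
        also have "\<dots> \<le> 16 * K^4 * (real j powr (1/b)) powr (4*a-1)"
          using cj jpos a by (intro mult_left_mono powr_mono2') auto
        also have "(real j powr (1/b)) powr (4*a-1) = real j powr ((4*a-1)/b)"
          by (simp add: powr_powr)
        finally show "prob (B j) \<le> 16 * K^4 * real j powr ((4*a-1)/b)" .
      qed
      show "(4*a-1)/b < -1" using a b True by (simp add: divide_less_eq)
    qed
    then show ?thesis by auto
  qed simp
  show ?thesis
    using AE1 AE2 AE_space
  proof (eventually_elim)
    case (elim \<omega>)
    have om: "\<omega> \<in> space M" using elim(3) .
    have sz: "S 0 \<omega> = 0" unfolding S_def Rg_def by simp
    have region: "\<bar>S N \<omega> - S p \<omega>\<bar> \<le> K^2 * (real (Mf b N * N) - real (Mf b p * p))" if "p \<le> N" for N p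
      unfolding S_def by (rule region_bound[OF b that bP])
    have H1: "\<exists>C. \<forall>k. \<bar>S (k^3) \<omega>\<bar> \<le> C * real (k^3) powr (b+1-2*a)"
    proof -
      have "eventually (\<lambda>k. \<bar>S (k^3) \<omega>\<bar> \<le> (1 + C2) * real (k^3) powr e) sequentially"
        using elim(1)
      proof eventually_elim
        case (elim k)
        then have "\<bar>S (k^3) \<omega> - E (k^3)\<bar> < real (k^3) powr e" using elim unfolding A_def
          using om by auto
        then show ?case using Ebound[of "k^3"] by (simp add: algebra_simps)
      qed
      from ev_to_all[of "\<lambda>N. S N \<omega>" "\<lambda>k. k^3", OF this] sz show ?thesis unfolding e_def by auto
    qed
    have H2: "\<exists>C. \<forall>j. \<bar>S (cf b j) \<omega>\<bar> \<le> C * real (cf b j) powr (b+1-2*a)" if bs: "b < 2*a"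
    proof -
      have "eventually (\<lambda>j. \<bar>S (cf b j) \<omega>\<bar> \<le> (1 + C2) * real (cf b j) powr e) sequentially"
        using elim(2)[rule_format, OF bs]
      proof eventually_elim
        case (elim j)
        then have "\<bar>S (cf b j) \<omega> - E (cf b j)\<bar> < real (cf b j) powr e" unfolding B_def
          using om by auto
        then show ?case using Ebound[of "cf b j"] by (simp add: algebra_simps)
      qed
      from ev_to_all[of "\<lambda>N. S N \<omega>" "cf b", OF this] sz show ?thesis unfolding e_def by auto
    qed
    have "\<exists>C. \<forall>N. \<bar>S N \<omega>\<bar> \<le> C * real N powr (b+1-2*a)"
      by (rule det_final[OF a b _ region H1 H2 sz]) auto
    then show ?case unfolding S_def .
  qed
qed

end


theorem lemma5p7:
  fixes M :: "'s measure" and X :: "nat \<Rightarrow> 's \<Rightarrow> real" and a b :: real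
  assumes "prob_space M"
    and meas: "\<And>n. X n \<in> borel_measurable M"
    and indep: "prob_space.indep_vars M (\<lambda>_. borel) X UNIV"
    and bdd: "\<exists>K. \<forall>n. AE \<omega> in M. \<bar>X n \<omega>\<bar> \<le> K"
    and mean: "\<exists>c. c \<noteq> 0 \<and>
      (\<lambda>n. prob_space.expectation M (X n) / (real n powr (-a))) \<longlonglongrightarrow> c"
    and a: "0 < a" "a < 1/6"
    and b: "0 < b"
  shows "AE \<omega> in M. \<exists>C. \<forall>N::nat.
    \<bar>\<Sum>m=1..nat \<lfloor>real N powr b\<rfloor>. \<Sum>n=1..N. X (n+m) \<omega> * X n \<omega>\<bar>
      \<le> C * real N powr (b + 1 - 2*a)"
proof -
  interpret prob_space M by fact
  obtain K0 where K0: "\<And>n. AE \<omega> in M. \<bar>X n \<omega>\<bar> \<le> K0" using bdd by auto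
  define K where "K = max K0 1"
  have K1: "1 \<le> K" unfolding K_def by simp
  define Y where "Y n \<omega> = max (-K) (min K (X n \<omega>))" for n \<omega>
  have indY: "indep_vars (\<lambda>_. borel) Y UNIV"
    unfolding Y_def by (rule indep_vars_compose2[OF indep]) measurable
  have bY: "\<bar>Y k \<omega>\<bar> \<le> K" for k \<omega> unfolding Y_def using K1 by auto
  have AEeq: "AE \<omega> in M. \<forall>n. X n \<omega> = Y n \<omega>"
    unfolding AE_all_countable
  proof
    fix n show "AE \<omega> in M. X n \<omega> = Y n \<omega>"
      using K0[of n] by eventually_elim (auto simp: Y_def K_def)
  qed
  have measY[measurable]: "Y n \<in> borel_measurable M" for n unfolding Y_def using meas by measurable
  have EY: "expectation (Y n) = expectation (X n)" for n
    by (rule integral_cong_AE) (use AEeq meas in auto)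
  obtain c where c: "(\<lambda>n. expectation (X n) / (real n powr (-a))) \<longlonglongrightarrow> c" using mean by auto
  obtain D where D: "\<And>n. norm (expectation (X n) / (real n powr (-a))) \<le> D"
    using convergent_imp_Bseq[OF convergentI[OF c]] by (auto elim!: BseqE) blast
  have muB: "\<bar>expectation (Y n)\<bar> \<le> D * real n powr (-a)" if "1 \<le> n" for n
  proof -
    have xp: "0 < real n powr (-a)" using that by simp
    have "\<bar>expectation (X n)\<bar> / real n powr (-a) \<le> D" using D[of n] xp by (simp add: abs_div)
    then show ?thesis using xp by (simp add: EY pos_divide_le_eq)
  qed
  have main: "AE \<omega> in M. \<exists>C. \<forall>N. \<bar>\<Sum>p\<in>Rg b N. \<Prod>k\<in>Jp p. Y k \<omega>\<bar> \<le> C * real N powr (b+1-2*a)"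
    by (rule main_bounded[OF indY bY K1 muB a b])
  show ?thesis
    using main AEeq
  proof eventually_elim
    case (elim \<omega>)
    have eq: "(\<Sum>m=1..nat \<lfloor>real N powr b\<rfloor>. \<Sum>n=1..N. X (n+m) \<omega> * X n \<omega>) = (\<Sum>p\<in>Rg b N. \<Prod>k\<in>Jp p. Y k \<omega>)" for N
    proof -
      have "(\<Sum>m=1..nat \<lfloor>real N powr b\<rfloor>. \<Sum>n=1..N. X (n+m) \<omega> * X n \<omega>) = (\<Sum>p\<in>Rg b N. Y (snd p + fst p) \<omega> * Y (snd p) \<omega>)"
        unfolding Rg_def Mf_def sum.cartesian_product using elim(2) by (simp add: case_prod_beta)
      also have "\<dots> = (\<Sum>p\<in>Rg b N. \<Prod>k\<in>Jp p. Y k \<omega>)"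
        by (intro sum.cong refl Jp_prod[symmetric]) (auto simp: Rg_def)
      finally show ?thesis .
    qed
    show ?case using elim(1) unfolding eq .
  qed
qed


end
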